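(* Let $\mathcal{A}^{(+)!}$ be the unital associative $\mathbb{C}$-algebra generated by $\theta^0,\theta^1,\theta^2,\theta^3$ (each of degree $1$) with relations $\theta^\mu\theta^\nu+\theta^\nu\theta^\mu=0$ for all $\mu,\nu\in\{0,1,2,3\}$ and $[\theta^0,\theta^k]+[\theta^\ell,\theta^m]=0$ for every cyclic permutation $(k,\ell,m)$ of $(1,2,3)$. Then $\mathcal{A}^{(+)!}_0=\mathbb{C}1$, $\mathcal{A}^{(+)!}_1=\bigoplus_{\lambda=0}^3\mathbb{C}\theta^\lambda$, $\mathcal{A}^{(+)!}_2=\bigoplus_{k=1}^3\mathbb{C}\theta^0\theta^k$, and $\mathcal{A}^{(+)!}_n=0$ for $n\ge3$.
   Context: $\mathcal{A}^{(+)!}$ is the quadratic dual of the self-duality algebra $\mathcal{A}^{(+)}$ generated by $\nabla_0,\dots,\nabla_3$ with relations $[\nabla_0,\nabla_k]=[\nabla_\ell,\nabla_m]$ for cyclic $(k,\ell,m)$ of $(1,2,3)$; $(\theta^\lambda)$ is the dual basis of $(\nabla_\lambda)$. *)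

theory Defs
  imports Complex_Main
begin

text \<open>The free unital associative C-algebra on generators theta^0..theta^3 is modelled as
  finitely supported functions from words (lists of generator indices < 4) to complex
  coefficients; the word w stands for the monomial theta^(w!0) theta^(w!1) ... .
  The grading puts every generator in degree 1, so degree = word length.\<close>

type_synonym ncpoly = "nat list \<Rightarrow> complex"

definition in_free :: "ncpoly \<Rightarrow> bool" where
  "in_free f \<longleftrightarrow> finite {w. f w \<noteq> 0} \<and> (\<forall>w. f w \<noteq> 0 \<longrightarrow> set w \<subseteq> {..<4})"

definition homog :: "nat \<Rightarrow> ncpoly \<Rightarrow> bool" where
  "homog n f \<longleftrightarrow> in_free f \<and> (\<forall>w. f w \<noteq> 0 \<longrightarrow> length w = n)"

definition mono :: "nat list \<Rightarrow> ncpoly" where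
  "mono w = (\<lambda>v. if v = w then 1 else 0)"

definition lmul :: "nat \<Rightarrow> ncpoly \<Rightarrow> ncpoly" where
  "lmul a f = (\<lambda>w. case w of [] \<Rightarrow> 0 | b # v \<Rightarrow> if b = a then f v else 0)"

definition rmul :: "nat \<Rightarrow> ncpoly \<Rightarrow> ncpoly" where
  "rmul a f = (\<lambda>w. if w \<noteq> [] \<and> last w = a then f (butlast w) else 0)"

definition anticomm_rel :: "nat \<Rightarrow> nat \<Rightarrow> ncpoly" where
  "anticomm_rel \<mu> \<nu> = (\<lambda>w. mono [\<mu>, \<nu>] w + mono [\<nu>, \<mu>] w)"

definition cyc_rel :: "nat \<Rightarrow> nat \<Rightarrow> nat \<Rightarrow> ncpoly" where
  "cyc_rel k l m = (\<lambda>w. mono [0, k] w - mono [k, 0] w + mono [l, m] w - mono [m, l] w)"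

definition rels :: "ncpoly set" where
  "rels = {anticomm_rel \<mu> \<nu> | \<mu> \<nu>. \<mu> < 4 \<and> \<nu> < 4}
        \<union> {cyc_rel 1 2 3, cyc_rel 2 3 1, cyc_rel 3 1 2}"

inductive_set rel_ideal :: "ncpoly set" where
  gen: "r \<in> rels \<Longrightarrow> r \<in> rel_ideal"
| zero: "(\<lambda>_. 0) \<in> rel_ideal"
| add: "f \<in> rel_ideal \<Longrightarrow> g \<in> rel_ideal \<Longrightarrow> (\<lambda>w. f w + g w) \<in> rel_ideal"
| smult: "f \<in> rel_ideal \<Longrightarrow> (\<lambda>w. c * f w) \<in> rel_ideal"
| lmul: "f \<in> rel_ideal \<Longrightarrow> a < 4 \<Longrightarrow> lmul a f \<in> rel_ideal"
| rmul: "f \<in> rel_ideal \<Longrightarrow> a < 4 \<Longrightarrow> rmul a f \<in> rel_ideal"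

text \<open>The images of the monomials in B (words of length n) form a basis of the degree-n
  component A_n = T_n / (I \<inter> T_n) of the quotient algebra: they are linearly independent
  modulo the ideal and span T_n modulo the ideal.\<close>
definition graded_basis :: "nat \<Rightarrow> nat list set \<Rightarrow> bool" where
  "graded_basis n B \<longleftrightarrow>
     (\<forall>b\<in>B. length b = n \<and> set b \<subseteq> {..<4}) \<and>
     (\<forall>c :: nat list \<Rightarrow> complex.
        (\<lambda>w. \<Sum>b\<in>B. c b * mono b w) \<in> rel_ideal \<longrightarrow> (\<forall>b\<in>B. c b = 0)) \<and>
     (\<forall>f. homog n f \<longrightarrow>
        (\<exists>c :: nat list \<Rightarrow> complex. (\<lambda>w. f w - (\<Sum>b\<in>B. c b * mono b w)) \<in> rel_ideal))"

end

theory Submission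
  imports Defs
begin

lemma I_comb: "F \<in> rel_ideal \<Longrightarrow> G \<in> rel_ideal \<Longrightarrow> (\<lambda>w. F w + e * G w) \<in> rel_ideal"
  by (intro rel_ideal.add rel_ideal.smult)

lemma I_cancel:
  assumes "(\<lambda>w. f w + e * g w) \<in> rel_ideal" "g \<in> rel_ideal" shows "f \<in> rel_ideal"
proof -
  have "(\<lambda>w. (f w + e * g w) + (-e) * g w) \<in> rel_ideal" using assms by (rule I_comb)
  then show ?thesis by simp
qed

lemma I_sum: "finite A \<Longrightarrow> (\<forall>x\<in>A. g x \<in> rel_ideal) \<Longrightarrow> (\<lambda>w. \<Sum>x\<in>A. g x w) \<in> rel_ideal"
proof (induction A rule: finite_induct)
  case empty then show ?case by (simp add: rel_ideal.zero)
next
  case (insert x F) then show ?case using rel_ideal.add[of "g x" "\<lambda>w. \<Sum>x\<in>F. g x w"] by simp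
qed

lemma lmul_mono: "lmul a (mono v) = mono (a # v)"
  by (rule ext, simp add: lmul_def mono_def split: list.split)

lemma rmul_mono: "rmul a (mono v) = mono (v @ [a])"
  apply (rule ext, simp add: rmul_def mono_def)
  by (metis append_butlast_last_id append_is_Nil_conv butlast_snoc last_snoc not_Cons_self2)

lemma lmul_comb: "lmul a (\<lambda>w. f w + e * g w) = (\<lambda>w. lmul a f w + e * lmul a g w)"
  by (rule ext, simp add: lmul_def split: list.split)

lemma rmul_comb: "rmul a (\<lambda>w. f w + e * g w) = (\<lambda>w. rmul a f w + e * rmul a g w)"
  by (rule ext, simp add: rmul_def)

lemma ac_I: "a < 4 \<Longrightarrow> b < 4 \<Longrightarrow> anticomm_rel a b \<in> rel_ideal"
  by (rule rel_ideal.gen, auto simp: rels_def)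

lemma cyc_I: "cyc_rel 1 2 3 \<in> rel_ideal" "cyc_rel 2 3 1 \<in> rel_ideal" "cyc_rel 3 1 2 \<in> rel_ideal"
  by (rule rel_ideal.gen, simp add: rels_def)+

lemma comb3: "g1 \<in> rel_ideal \<Longrightarrow> g2 \<in> rel_ideal \<Longrightarrow> g3 \<in> rel_ideal \<Longrightarrow>
   (\<lambda>w. c1 * g1 w + c2 * g2 w + c3 * g3 w) \<in> rel_ideal"
  using rel_ideal.add[OF rel_ideal.add[OF rel_ideal.smult rel_ideal.smult] rel_ideal.smult] by blast

lemma sq_I: "a < 4 \<Longrightarrow> mono [a, a] \<in> rel_ideal"
proof -
  assume "a < 4"
  then have "(\<lambda>w. (1/2) * anticomm_rel a a w) \<in> rel_ideal" by (intro rel_ideal.smult ac_I)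
  moreover have "(\<lambda>w. (1/2) * anticomm_rel a a w) = mono [a,a]"
    by (rule ext, simp add: anticomm_rel_def mono_def)
  ultimately show ?thesis by simp
qed

lemma cycpair:
  assumes "(k,l,m) \<in> {(1,2,3),(2,3,1),(3,1,2)}"
  shows "(\<lambda>w. mono [l,m] w + 1 * mono [0,k] w) \<in> rel_ideal"
        "(\<lambda>w. mono [m,l] w + (-1) * mono [0,k] w) \<in> rel_ideal"
proof -
  have c: "cyc_rel k l m \<in> rel_ideal" using assms cyc_I by auto
  have a1: "anticomm_rel k 0 \<in> rel_ideal" and a2: "anticomm_rel l m \<in> rel_ideal"
    using assms by (auto intro: ac_I)
  have e1: "(\<lambda>w. mono [l,m] w + 1 * mono [0,k] w) =
      (\<lambda>w. (1/2) * cyc_rel k l m w + (1/2) * anticomm_rel k 0 w + (1/2) * anticomm_rel l m w)"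
    using assms by (auto intro!: ext simp: mono_def cyc_rel_def anticomm_rel_def)
  show "(\<lambda>w. mono [l,m] w + 1 * mono [0,k] w) \<in> rel_ideal"
    unfolding e1 by (rule comb3[OF c a1 a2])
  have e2: "(\<lambda>w. mono [m,l] w + (-1) * mono [0,k] w) =
      (\<lambda>w. (-1/2) * cyc_rel k l m w + (-1/2) * anticomm_rel k 0 w + (1/2) * anticomm_rel l m w)"
    using assms by (auto intro!: ext simp: mono_def cyc_rel_def anticomm_rel_def)
  show "(\<lambda>w. mono [m,l] w + (-1) * mono [0,k] w) \<in> rel_ideal"
    unfolding e2 by (rule comb3[OF c a1 a2])
qed

lemma deg2: "a < 4 \<Longrightarrow> b < 4 \<Longrightarrow>
  \<exists>e k. k \<in> {1,2,3} \<and> (\<lambda>w. mono [a,b] w + e * mono [0,k] w) \<in> rel_ideal"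
proof -
  assume ab: "a < 4" "b < 4"
  show ?thesis
  proof (cases "a = b")
    case True
    then have "(\<lambda>w. mono [a,b] w + 0 * mono [0,1] w) \<in> rel_ideal" using sq_I ab by simp
    then show ?thesis by blast
  next
    case False
    show ?thesis
    proof (cases "a = 0")
      case True
      then have "(\<lambda>w. mono [a,b] w + (-1) * mono [0,b] w) \<in> rel_ideal" by (simp add: rel_ideal.zero)
      then show ?thesis using True False ab by (intro exI[of _ "-1"] exI[of _ b]) auto
    next
      case a0: False
      show ?thesis
      proof (cases "b = 0")
        case True
        have "(\<lambda>w. mono [a,b] w + 1 * mono [0,a] w) = anticomm_rel a 0"
          using True by (auto intro!: ext simp: anticomm_rel_def)
        then have "(\<lambda>w. mono [a,b] w + 1 * mono [0,a] w) \<in> rel_ideal" using ac_I ab by simp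
        then show ?thesis using a0 ab by (intro exI[of _ "1"] exI[of _ a]) auto
      next
        case b0: False
        have "a \<in> {1,2,3}" "b \<in> {1,2,3}" using a0 b0 ab by auto
        then consider "(a,b) = (2,3)" | "(a,b) = (3,1)" | "(a,b) = (1,2)"
          | "(a,b) = (3,2)" | "(a,b) = (1,3)" | "(a,b) = (2,1)" using False by auto
        then show ?thesis
        proof cases
          case 1
          have H: "(\<lambda>w. mono [2,3] w + 1 * mono [0,1] w) \<in> rel_ideal"
            by (rule cycpair(1)) simp
          show ?thesis using H 1 by (metis insertI1 insertI2 Pair_inject)
        next
          case 2
          have H: "(\<lambda>w. mono [3,1] w + 1 * mono [0,2] w) \<in> rel_ideal"
            by (rule cycpair(1)) simp
          show ?thesis using H 2 by (metis insertI1 insertI2 Pair_inject)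
        next
          case 3
          have H: "(\<lambda>w. mono [1,2] w + 1 * mono [0,3] w) \<in> rel_ideal"
            by (rule cycpair(1)) simp
          show ?thesis using H 3 by (metis insertI1 insertI2 Pair_inject)
        next
          case 4
          have H: "(\<lambda>w. mono [3,2] w + (-1) * mono [0,1] w) \<in> rel_ideal"
            by (rule cycpair(2)) simp
          show ?thesis using H 4 by (metis insertI1 insertI2 Pair_inject)
        next
          case 5
          have H: "(\<lambda>w. mono [1,3] w + (-1) * mono [0,2] w) \<in> rel_ideal"
            by (rule cycpair(2)) simp
          show ?thesis using H 5 by (metis insertI1 insertI2 Pair_inject)
        next
          case 6
          have H: "(\<lambda>w. mono [2,1] w + (-1) * mono [0,3] w) \<in> rel_ideal"
            by (rule cycpair(2)) simp
          show ?thesis using H 6 by (metis insertI1 insertI2 Pair_inject)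
        qed
      qed
    qed
  qed
qed

lemma m00k: "k < 4 \<Longrightarrow> mono [0,0,k] \<in> rel_ideal"
  using rel_ideal.rmul[OF sq_I[of 0], of k] rmul_mono[of k "[0,0]"] by simp

lemma m0kc: "k < 4 \<Longrightarrow> c < 4 \<Longrightarrow> mono [0,k,c] \<in> rel_ideal"
proof -
  assume h: "k < 4" "c < 4"
  obtain e k' where k': "k' \<in> {1,2,3}" and F: "(\<lambda>w. mono [k,c] w + e * mono [0,k'] w) \<in> rel_ideal"
    using deg2[OF h] by blast
  have "lmul 0 (\<lambda>w. mono [k,c] w + e * mono [0,k'] w) \<in> rel_ideal" using rel_ideal.lmul[OF F] by simp
  then have "(\<lambda>w. mono [0,k,c] w + e * mono [0,0,k'] w) \<in> rel_ideal"
    by (simp add: lmul_comb lmul_mono)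
  then show ?thesis using I_cancel m00k k' by auto
qed

lemma mabc: "a < 4 \<Longrightarrow> b < 4 \<Longrightarrow> c < 4 \<Longrightarrow> mono [a,b,c] \<in> rel_ideal"
proof -
  assume h: "a < 4" "b < 4" "c < 4"
  obtain e k' where k': "k' \<in> {1,2,3}" and F: "(\<lambda>w. mono [a,b] w + e * mono [0,k'] w) \<in> rel_ideal"
    using deg2 h by blast
  have "rmul c (\<lambda>w. mono [a,b] w + e * mono [0,k'] w) \<in> rel_ideal" using rel_ideal.rmul[OF F] h by simp
  then have "(\<lambda>w. mono [a,b,c] w + e * mono [0,k',c] w) \<in> rel_ideal"
    by (simp add: rmul_comb rmul_mono)
  then show ?thesis using I_cancel m0kc k' h by auto
qed

lemma mono_prefix: "set u \<subseteq> {..<4} \<Longrightarrow> mono v \<in> rel_ideal \<Longrightarrow> mono (u @ v) \<in> rel_ideal"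
proof (induction u)
  case Nil then show ?case by simp
next
  case (Cons x u) then show ?case using rel_ideal.lmul[of "mono (u@v)" x] lmul_mono by simp
qed

lemma mono_long: "length w \<ge> 3 \<Longrightarrow> set w \<subseteq> {..<4} \<Longrightarrow> mono w \<in> rel_ideal"
proof -
  assume h: "length w \<ge> 3" "set w \<subseteq> {..<4}"
  define u where "u = take (length w - 3) w"
  define v where "v = drop (length w - 3) w"
  have w: "w = u @ v" by (simp add: u_def v_def)
  have lv: "length v = 3" using h by (simp add: v_def)
  then obtain a b c where v: "v = [a,b,c]"
    by (auto simp: length_Suc_conv numeral_3_eq_3)
  have u4: "set u \<subseteq> {..<4}" and v4: "set v \<subseteq> {..<4}" using h w by auto
  have "a < 4" "b < 4" "c < 4" using v4 v by auto
  then have "mono v \<in> rel_ideal" using v mabc by simp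
  then show ?thesis using w mono_prefix[OF u4] by simp
qed

lemma f_expand: "finite {w. f w \<noteq> 0} \<Longrightarrow> f = (\<lambda>v. \<Sum>w\<in>{w. f w \<noteq> 0}. f w * mono w v)"
  by (rule ext, simp add: mono_def sum.delta' if_distrib cong: if_cong)

definition spanned :: "nat list set \<Rightarrow> ncpoly \<Rightarrow> bool" where
  "spanned B g \<longleftrightarrow> (\<exists>c :: nat list \<Rightarrow> complex. (\<lambda>w. g w - (\<Sum>b\<in>B. c b * mono b w)) \<in> rel_ideal)"

lemma spanned_comb:
  assumes "spanned B g" "spanned B h" shows "spanned B (\<lambda>w. g w + e * h w)"
proof -
  obtain c1 c2 where 1: "(\<lambda>w. g w - (\<Sum>b\<in>B. c1 b * mono b w)) \<in> rel_ideal"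
    and 2: "(\<lambda>w. h w - (\<Sum>b\<in>B. c2 b * mono b w)) \<in> rel_ideal"
    using assms by (auto simp: spanned_def)
  have "(\<lambda>w. (g w - (\<Sum>b\<in>B. c1 b * mono b w)) + e * (h w - (\<Sum>b\<in>B. c2 b * mono b w))) \<in> rel_ideal"
    by (rule I_comb[OF 1 2])
  moreover have "(\<lambda>w. (g w - (\<Sum>b\<in>B. c1 b * mono b w)) + e * (h w - (\<Sum>b\<in>B. c2 b * mono b w)))
     = (\<lambda>w. (g w + e * h w) - (\<Sum>b\<in>B. (c1 b + e * c2 b) * mono b w))"
    by (rule ext, simp add: algebra_simps sum.distrib sum_distrib_left)
  ultimately show ?thesis unfolding spanned_def by auto
qed

lemma spanned_zero: "spanned B (\<lambda>_. 0)"
  unfolding spanned_def by (rule exI[of _ "\<lambda>_. 0"], simp add: rel_ideal.zero)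

lemma spanned_sum: "finite A \<Longrightarrow> (\<forall>x\<in>A. spanned B (mono x)) \<Longrightarrow>
   spanned B (\<lambda>v. \<Sum>x\<in>A. f x * mono x v)"
proof (induction A rule: finite_induct)
  case empty then show ?case using spanned_zero by simp
next
  case (insert x F)
  then have "spanned B (\<lambda>v. (\<Sum>x\<in>F. f x * mono x v) + f x * mono x v)"
    by (intro spanned_comb) auto
  then show ?case using insert by (simp add: add.commute)
qed

lemma B2_spanned: "a < 4 \<Longrightarrow> b < 4 \<Longrightarrow> spanned {[0, 1], [0, 2], [0, 3]} (mono [a,b])"
proof -
  assume h: "a < 4" "b < 4"
  obtain e k where k: "k \<in> {1,2,3}" and F: "(\<lambda>w. mono [a,b] w + e * mono [0,k] w) \<in> rel_ideal"
    using deg2[OF h] by blast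
  let ?c = "\<lambda>x. if x = [0,k] then - e else 0"
  have eq: "(\<lambda>w. mono [a,b] w - (\<Sum>x\<in>{[0, 1], [0, 2], [0, 3]}. ?c x * mono x w)) =
        (\<lambda>w. mono [a,b] w + e * mono [0,k] w)"
    using k apply - apply (rule ext) by (erule insertE; simp; blast)
  show ?thesis unfolding spanned_def
    apply (rule exI[of _ ?c]) apply (subst eq) by (rule F)
qed

definition phi :: "nat \<Rightarrow> nat \<Rightarrow> nat \<Rightarrow> ncpoly \<Rightarrow> complex" where
  "phi k l m f = f [0,k] - f [k,0] - f [l,m] + f [m,l]"

definition invI :: "ncpoly \<Rightarrow> bool" where
  "invI f \<longleftrightarrow> f [] = 0 \<and> (\<forall>a. f [a] = 0) \<and> phi 1 2 3 f = 0 \<and> phi 2 3 1 f = 0 \<and> phi 3 1 2 f = 0"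

lemma ac_sym: "anticomm_rel a b [x,y] = anticomm_rel a b [y,x]"
  unfolding anticomm_rel_def mono_def by (cases "x = a"; cases "y = b"; cases "x = b"; cases "y = a"; simp)

lemma inv_ac: "invI (anticomm_rel a b)"
proof -
  have "phi k l m (anticomm_rel a b) = 0" for k l m
    unfolding phi_def using ac_sym[of a b 0 k] ac_sym[of a b l m] by simp
  moreover have "anticomm_rel a b [] = 0" "anticomm_rel a b [c] = 0" for c
    unfolding anticomm_rel_def mono_def by simp_all
  ultimately show ?thesis unfolding invI_def by blast
qed

lemma inv_cyc: "invI (cyc_rel 1 2 3)" "invI (cyc_rel 2 3 1)" "invI (cyc_rel 3 1 2)"
  unfolding invI_def phi_def cyc_rel_def mono_def by simp_all

lemma inv_ideal: "f \<in> rel_ideal \<Longrightarrow> invI f"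
proof (induction rule: rel_ideal.induct)
  case (gen r)
  then show ?case
    unfolding rels_def using inv_ac inv_cyc by blast
next
  case zero then show ?case by (simp add: invI_def phi_def)
next
  case (add f g) then show ?case by (simp add: invI_def phi_def algebra_simps)
next
  case (smult f c)
  have "phi k l m (\<lambda>w. c * f w) = c * phi k l m f" for k l m by (simp add: phi_def algebra_simps)
  then show ?case using smult by (simp add: invI_def)
next
  case (lmul f a) then show ?case by (simp add: invI_def phi_def lmul_def)
next
  case (rmul f a) then show ?case by (simp add: invI_def phi_def rmul_def)
qed

theorem proposition2:
  shows "graded_basis 0 {[]} \<and>
         graded_basis 1 {[0], [1], [2], [3]} \<and>
         graded_basis 2 {[0, 1], [0, 2], [0, 3]} \<and>
         (\<forall>n\<ge>3. graded_basis n {})"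
proof (intro conjI allI impI)
  show "graded_basis 0 {[]}"
    unfolding graded_basis_def
  proof (intro conjI allI impI)
    fix c :: "nat list \<Rightarrow> complex"
    assume "(\<lambda>w. \<Sum>b\<in>{[]}. c b * mono b w) \<in> rel_ideal"
    then show "\<forall>b\<in>{[]}. c b = 0" using inv_ideal[of "\<lambda>w. \<Sum>b\<in>{[]}. c b * mono b w"]
      by (simp add: invI_def mono_def)
  next
    fix f assume "homog 0 f"
    then have "(\<lambda>w. f w - (\<Sum>b\<in>{[]}. f b * mono b w)) = (\<lambda>_. 0)"
      by (auto intro!: ext simp: homog_def mono_def)
    then show "\<exists>c. (\<lambda>w. f w - (\<Sum>b\<in>{[]}. c b * mono b w)) \<in> rel_ideal"
      apply - apply (rule exI[of _ f]) apply (erule ssubst) by (rule rel_ideal.zero)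
  qed auto
  show "graded_basis 1 {[0], [1], [2], [3]}"
    unfolding graded_basis_def
  proof (intro conjI allI impI)
    fix c :: "nat list \<Rightarrow> complex"
    assume "(\<lambda>w. \<Sum>b\<in>{[0], [1], [2], [3]}. c b * mono b w) \<in> rel_ideal"
    then have "invI (\<lambda>w. \<Sum>b\<in>{[0], [1], [2], [3]}. c b * mono b w)" by (rule inv_ideal)
    then have H: "\<forall>a. (\<Sum>b\<in>{[0], [1], [2], [3]}. c b * mono b [a]) = 0" by (simp add: invI_def)
    have "c [0] = 0" using H[rule_format, of 0] by (simp add: mono_def)
    moreover have "c [1] = 0" using H[rule_format, of 1] by (simp add: mono_def)
    moreover have "c [2] = 0" using H[rule_format, of 2] by (simp add: mono_def)
    moreover have "c [3] = 0" using H[rule_format, of 3] by (simp add: mono_def)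
    ultimately show "\<forall>b\<in>{[0], [1], [2], [3]}. c b = 0" by simp
  next
    fix f assume hf: "homog 1 f"
    have "(\<lambda>w. f w - (\<Sum>b\<in>{[0], [1], [2], [3]}. f b * mono b w)) = (\<lambda>_. 0)"
    proof (rule ext)
      fix w
      show "f w - (\<Sum>b\<in>{[0], [1], [2], [3]}. f b * mono b w) = 0"
      proof (cases "f w = 0")
        case True
        then show ?thesis by (auto simp: mono_def)
      next
        case False
        then have "length w = 1" "set w \<subseteq> {..<4}" using hf by (auto simp: homog_def in_free_def)
        then obtain a where "w = [a]" "a < 4" by (cases w) auto
        then have "a = 0 \<or> a = 1 \<or> a = 2 \<or> a = 3" by auto
        then show ?thesis using \<open>w = [a]\<close> by (auto simp: mono_def)
      qed
    qed
    then show "\<exists>c. (\<lambda>w. f w - (\<Sum>b\<in>{[0], [1], [2], [3]}. c b * mono b w)) \<in> rel_ideal"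
      apply - apply (rule exI[of _ f]) apply (erule ssubst) by (rule rel_ideal.zero)
  qed auto
  show "graded_basis 2 {[0, 1], [0, 2], [0, 3]}"
    unfolding graded_basis_def
  proof (intro conjI allI impI)
    fix c :: "nat list \<Rightarrow> complex"
    assume "(\<lambda>w. \<Sum>b\<in>{[0, 1], [0, 2], [0, 3]}. c b * mono b w) \<in> rel_ideal"
    then have "invI (\<lambda>w. \<Sum>b\<in>{[0, 1], [0, 2], [0, 3]}. c b * mono b w)" by (rule inv_ideal)
    moreover have "phi 1 2 3 (\<lambda>w. \<Sum>b\<in>{[0, 1], [0, 2], [0, 3]}. c b * mono b w) = c [0,1]"
      "phi 2 3 1 (\<lambda>w. \<Sum>b\<in>{[0, 1], [0, 2], [0, 3]}. c b * mono b w) = c [0,2]"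
      "phi 3 1 2 (\<lambda>w. \<Sum>b\<in>{[0, 1], [0, 2], [0, 3]}. c b * mono b w) = c [0,3]"
      by (simp_all add: phi_def mono_def)
    ultimately show "\<forall>b\<in>{[0, 1], [0, 2], [0, 3]}. c b = 0"
      by (simp add: invI_def)
  next
    fix f assume hf: "homog 2 f"
    then have fin: "finite {w. f w \<noteq> 0}" by (simp add: homog_def in_free_def)
    have "\<forall>x\<in>{w. f w \<noteq> 0}. spanned {[0, 1], [0, 2], [0, 3]} (mono x)"
    proof
      fix x assume "x \<in> {w. f w \<noteq> 0}"
      then have "length x = 2" "set x \<subseteq> {..<4}" using hf by (auto simp: homog_def in_free_def)
      then obtain a b where "x = [a,b]" "a < 4" "b < 4"
        by (auto simp: length_Suc_conv numeral_2_eq_2)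
      then show "spanned {[0, 1], [0, 2], [0, 3]} (mono x)" using B2_spanned by simp
    qed
    then have S: "spanned {[0, 1], [0, 2], [0, 3]} (\<lambda>v. \<Sum>x\<in>{w. f w \<noteq> 0}. f x * mono x v)"
      by (rule spanned_sum[OF fin])
    have fe: "(\<lambda>v. \<Sum>x\<in>{w. f w \<noteq> 0}. f x * mono x v) = f" by (rule f_expand[OF fin, symmetric])
    have "spanned {[0, 1], [0, 2], [0, 3]} f" using S by (simp only: fe)
    then show "\<exists>c. (\<lambda>w. f w - (\<Sum>b\<in>{[0, 1], [0, 2], [0, 3]}. c b * mono b w)) \<in> rel_ideal"
      by (simp add: spanned_def)
  qed auto
next
  fix n :: nat assume n: "n \<ge> 3"
  show "graded_basis n {}"
    unfolding graded_basis_def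
  proof (intro conjI allI impI)
    fix f assume hf: "homog n f"
    then have fin: "finite {w. f w \<noteq> 0}" by (simp add: homog_def in_free_def)
    have "(\<lambda>v. \<Sum>w\<in>{w. f w \<noteq> 0}. f w * mono w v) \<in> rel_ideal"
    proof (rule I_sum[OF fin], rule ballI)
      fix x assume "x \<in> {w. f w \<noteq> 0}"
      then have "length x \<ge> 3" "set x \<subseteq> {..<4}" using hf n by (auto simp: homog_def in_free_def)
      then show "(\<lambda>v. f x * mono x v) \<in> rel_ideal" by (intro rel_ideal.smult mono_long)
    qed
    moreover have fe: "(\<lambda>v. \<Sum>x\<in>{w. f w \<noteq> 0}. f x * mono x v) = f" by (rule f_expand[OF fin, symmetric])
    ultimately have "f \<in> rel_ideal" by (simp only: fe)
    then show "\<exists>c. (\<lambda>w. f w - (\<Sum>b\<in>{}. c b * mono b w)) \<in> rel_ideal" by simp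
  qed auto
qed

end
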